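(* Suppose a large scale group $G$ acts by uniform coarse equivalences on a large scale space $X$, and the action is proper and cobounded. Then for each $x_0\in X$ the map $G\to X$, $g\mapsto g\cdot x_0$, is a coarse equivalence.
   Context: A large scale space is a set $X$ with a family of covers (uniformly bounded covers) closed under stars $st(\mathcal U,\mathcal V)=\{st(A,\mathcal V):A\in\mathcal U\}$ (where $st(A,\mathcal V)$ is the union of elements of $\mathcal V$ meeting $A$) and under coarsenings-by-refinement (any cover refining a uniformly bounded cover is uniformly bounded); bounded sets are subsets of elements of uniformly bounded covers, and the union of two bounded sets is assumed bounded. A large scale group is a group $G$ with a bornology $\mathcal B$ (a cover closed under subsets and finite unions) closed under inverses and products; its uniformly bounded covers are those refining $\{gB\}_{g\in G}$ for some $B\in\mathcal B$. $G$ acts on $X$ by uniform coarse equivalences if for every uniformly bounded cover $\{U_s\}_{s\in S}$ of $X$ the cover $\{g\cdot U_s\}_{s\in S,g\in G}$ is uniformly bounded. The action is cobounded if $G\cdot B=X$ for some bounded $B\subseteq X$. The action is proper if for every bounded $B\subseteq X$ the set $\{g\in G:(g\cdot B)\cap B\neq\emptyset\}$ is bounded in $G$, and for every bounded $K\subseteq G$ and every $x\in X$ the set $K\cdot x$ is bounded in $X$. A map is a coarse equivalence if it is coarse (preimages of bounded sets bounded) and large scale continuous (images of uniformly bounded covers refine uniformly bounded covers) and has a coarse large scale continuous map in the other direction such that both compositions are close to the identities (maps $f,f'$ into $Y$ are close if $f(x)\in st(f'(x),\mathcal U)$ for all $x$ for some uniformly bounded cover $\mathcal U$ of $Y$). 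*)

theory Defs
  imports "HOL-Algebra.Group_Action"
begin

definition is_cover :: "'a set \<Rightarrow> 'a set set \<Rightarrow> bool" where
  "is_cover X U \<longleftrightarrow> U \<subseteq> Pow X \<and> \<Union>U = X"

definition st :: "'a set \<Rightarrow> 'a set set \<Rightarrow> 'a set" where
  "st A V = \<Union>{W \<in> V. W \<inter> A \<noteq> {}}"

definition st_cover :: "'a set set \<Rightarrow> 'a set set \<Rightarrow> 'a set set" where
  "st_cover U V = {st A V | A. A \<in> U}"

definition refines :: "'a set set \<Rightarrow> 'a set set \<Rightarrow> bool" where
  "refines U V \<longleftrightarrow> (\<forall>A\<in>U. \<exists>B\<in>V. A \<subseteq> B)"

definition ls_bounded :: "'a set set set \<Rightarrow> 'a set \<Rightarrow> bool" where
  "ls_bounded LS B \<longleftrightarrow> (\<exists>U\<in>LS. \<exists>A\<in>U. B \<subseteq> A)"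

text \<open>A large scale space: carrier X, family LS of uniformly bounded covers.\<close>
definition large_scale_space :: "'a set \<Rightarrow> 'a set set set \<Rightarrow> bool" where
  "large_scale_space X LS \<longleftrightarrow>
     (\<forall>U\<in>LS. is_cover X U) \<and>
     (\<forall>U\<in>LS. \<forall>V\<in>LS. st_cover U V \<in> LS) \<and>
     (\<forall>U V. V \<in> LS \<and> is_cover X U \<and> refines U V \<longrightarrow> U \<in> LS) \<and>
     (\<forall>A B. ls_bounded LS A \<and> ls_bounded LS B \<longrightarrow> ls_bounded LS (A \<union> B))"

definition large_scale_group :: "('g, 'm) monoid_scheme \<Rightarrow> 'g set set \<Rightarrow> bool" where
  "large_scale_group G \<B> \<longleftrightarrow> group G \<and>
     is_cover (carrier G) \<B> \<and>
     (\<forall>B\<in>\<B>. \<forall>C. C \<subseteq> B \<longrightarrow> C \<in> \<B>) \<and>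
     (\<forall>B\<in>\<B>. \<forall>C\<in>\<B>. B \<union> C \<in> \<B>) \<and>
     (\<forall>B\<in>\<B>. (\<lambda>g. inv\<^bsub>G\<^esub> g) ` B \<in> \<B>) \<and>
     (\<forall>B\<in>\<B>. \<forall>C\<in>\<B>. B <#>\<^bsub>G\<^esub> C \<in> \<B>)"

definition group_ls :: "('g, 'm) monoid_scheme \<Rightarrow> 'g set set \<Rightarrow> 'g set set set" where
  "group_ls G \<B> = {U. is_cover (carrier G) U \<and>
     (\<exists>B\<in>\<B>. refines U {g <#\<^bsub>G\<^esub> B | g. g \<in> carrier G})}"

definition acts_by_uniform_coarse_equivalences ::
  "('g, 'm) monoid_scheme \<Rightarrow> 'a set set set \<Rightarrow> ('g \<Rightarrow> 'a \<Rightarrow> 'a) \<Rightarrow> bool" where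
  "acts_by_uniform_coarse_equivalences G LS \<phi> \<longleftrightarrow>
     (\<forall>U\<in>LS. {\<phi> g ` A | g A. g \<in> carrier G \<and> A \<in> U} \<in> LS)"

definition cobounded_action ::
  "('g, 'm) monoid_scheme \<Rightarrow> 'a set \<Rightarrow> 'a set set set \<Rightarrow> ('g \<Rightarrow> 'a \<Rightarrow> 'a) \<Rightarrow> bool" where
  "cobounded_action G X LS \<phi> \<longleftrightarrow>
     (\<exists>B. ls_bounded LS B \<and> (\<Union>g\<in>carrier G. \<phi> g ` B) = X)"

definition proper_action ::
  "('g, 'm) monoid_scheme \<Rightarrow> 'g set set \<Rightarrow> 'a set \<Rightarrow> 'a set set set \<Rightarrow> ('g \<Rightarrow> 'a \<Rightarrow> 'a) \<Rightarrow> bool" where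
  "proper_action G \<B> X LS \<phi> \<longleftrightarrow>
     (\<forall>B. ls_bounded LS B \<longrightarrow>
        ls_bounded (group_ls G \<B>) {g \<in> carrier G. \<phi> g ` B \<inter> B \<noteq> {}}) \<and>
     (\<forall>K x. ls_bounded (group_ls G \<B>) K \<and> x \<in> X \<longrightarrow> ls_bounded LS ((\<lambda>g. \<phi> g x) ` K))"

definition coarse_map :: "'a set \<Rightarrow> 'a set set set \<Rightarrow> 'b set set set \<Rightarrow> ('a \<Rightarrow> 'b) \<Rightarrow> bool" where
  "coarse_map X LSX LSY f \<longleftrightarrow>
     (\<forall>B. ls_bounded LSY B \<longrightarrow> ls_bounded LSX (f -` B \<inter> X))"

definition ls_continuous :: "'a set set set \<Rightarrow> 'b set set set \<Rightarrow> ('a \<Rightarrow> 'b) \<Rightarrow> bool" where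
  "ls_continuous LSX LSY f \<longleftrightarrow>
     (\<forall>U\<in>LSX. \<exists>V\<in>LSY. refines ((\<lambda>A. f ` A) ` U) V)"

definition close_maps :: "'a set \<Rightarrow> 'b set set set \<Rightarrow> ('a \<Rightarrow> 'b) \<Rightarrow> ('a \<Rightarrow> 'b) \<Rightarrow> bool" where
  "close_maps X LSY f f' \<longleftrightarrow> (\<exists>U\<in>LSY. \<forall>x\<in>X. f x \<in> st {f' x} U)"

definition coarse_equivalence ::
  "'a set \<Rightarrow> 'a set set set \<Rightarrow> 'b set \<Rightarrow> 'b set set set \<Rightarrow> ('a \<Rightarrow> 'b) \<Rightarrow> bool" where
  "coarse_equivalence X LSX Y LSY f \<longleftrightarrow>
     f \<in> X \<rightarrow> Y \<and> coarse_map X LSX LSY f \<and> ls_continuous LSX LSY f \<and>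
     (\<exists>h. h \<in> Y \<rightarrow> X \<and> coarse_map Y LSY LSX h \<and> ls_continuous LSY LSX h \<and>
        close_maps X LSX (h \<circ> f) id \<and> close_maps Y LSY (f \<circ> h) id)"

end

theory Submission
  imports Defs
begin

lemma lsb_mono: "ls_bounded L B \<Longrightarrow> B' \<subseteq> B \<Longrightarrow> ls_bounded L B'"
  unfolding ls_bounded_def by blast

lemma lcoset_mem: "c \<in> C \<Longrightarrow> x \<otimes>\<^bsub>G\<^esub> c \<in> x <#\<^bsub>G\<^esub> C"
  unfolding l_coset_def by blast

lemma st_mono: "A \<subseteq> A' \<Longrightarrow> st A U \<subseteq> st A' U"
  unfolding st_def by blast

lemma st_mem: "W \<in> U \<Longrightarrow> y \<in> W \<Longrightarrow> W \<subseteq> st {y} U"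
  unfolding st_def by blast

context
  fixes G :: "('g, 'm) monoid_scheme" and \<B> :: "'g set set"
  assumes LG: "large_scale_group G \<B>"
begin

lemma LGD: "group G" "is_cover (carrier G) \<B>"
  "\<And>B C. B \<in> \<B> \<Longrightarrow> C \<subseteq> B \<Longrightarrow> C \<in> \<B>"
  "\<And>B C. B \<in> \<B> \<Longrightarrow> C \<in> \<B> \<Longrightarrow> B \<union> C \<in> \<B>"
  "\<And>B. B \<in> \<B> \<Longrightarrow> (\<lambda>g. inv\<^bsub>G\<^esub> g) ` B \<in> \<B>"
  "\<And>B C. B \<in> \<B> \<Longrightarrow> C \<in> \<B> \<Longrightarrow> B <#>\<^bsub>G\<^esub> C \<in> \<B>"
  using LG unfolding large_scale_group_def by simp_all

lemma grp: "group G" by (rule LGD(1))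

lemma B_sub: "C \<in> \<B> \<Longrightarrow> C \<subseteq> carrier G"
  using LGD(2) unfolding is_cover_def by blast

lemma B_single: "g \<in> carrier G \<Longrightarrow> {g} \<in> \<B>"
proof -
  assume g: "g \<in> carrier G"
  then obtain C where "C \<in> \<B>" "g \<in> C"
    using LGD(2) unfolding is_cover_def by blast
  then show ?thesis using LGD(3)[of C "{g}"] by blast
qed

lemma B_union: "C \<in> \<B> \<Longrightarrow> D \<in> \<B> \<Longrightarrow> C \<union> D \<in> \<B>"
  by (rule LGD(4))

lemma B_inv: "C \<in> \<B> \<Longrightarrow> (\<lambda>g. inv\<^bsub>G\<^esub> g) ` C \<in> \<B>"
  by (rule LGD(5))

lemma B_prod: "C \<in> \<B> \<Longrightarrow> D \<in> \<B> \<Longrightarrow> C <#>\<^bsub>G\<^esub> D \<in> \<B>"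
  by (rule LGD(6))

lemma B_coset: "g \<in> carrier G \<Longrightarrow> C \<in> \<B> \<Longrightarrow> g <#\<^bsub>G\<^esub> C \<in> \<B>"
  unfolding l_coset_eq_set_mult by (rule B_prod[OF B_single])

lemma B_one: "C \<in> \<B> \<Longrightarrow> C \<union> {\<one>\<^bsub>G\<^esub>} \<in> \<B>"
  using B_union B_single monoid.one_closed[OF group.is_monoid[OF grp]] by blast

lemma coverLS:
  assumes "C \<in> \<B>"
  shows "{x <#\<^bsub>G\<^esub> (C \<union> {\<one>\<^bsub>G\<^esub>}) | x. x \<in> carrier G} \<in> group_ls G \<B>"
proof -
  have C1: "C \<union> {\<one>\<^bsub>G\<^esub>} \<in> \<B>" using B_one assms .
  have "is_cover (carrier G) {x <#\<^bsub>G\<^esub> (C \<union> {\<one>\<^bsub>G\<^esub>}) | x. x \<in> carrier G}"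
  proof -
    have "x <#\<^bsub>G\<^esub> (C \<union> {\<one>\<^bsub>G\<^esub>}) \<subseteq> carrier G" if "x \<in> carrier G" for x
      using B_sub[OF B_coset[OF that C1]] .
    moreover have "x \<in> x <#\<^bsub>G\<^esub> (C \<union> {\<one>\<^bsub>G\<^esub>})" if "x \<in> carrier G" for x
      using lcoset_mem[of "\<one>\<^bsub>G\<^esub>" "C \<union> {\<one>\<^bsub>G\<^esub>}" G x] monoid.r_one[OF group.is_monoid[OF grp] that] by simp
    ultimately show ?thesis unfolding is_cover_def by blast
  qed
  moreover have "refines {x <#\<^bsub>G\<^esub> (C \<union> {\<one>\<^bsub>G\<^esub>}) | x. x \<in> carrier G}
      {g <#\<^bsub>G\<^esub> (C \<union> {\<one>\<^bsub>G\<^esub>}) | g. g \<in> carrier G}"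
    unfolding refines_def by blast
  ultimately show ?thesis unfolding group_ls_def using C1 by blast
qed

lemma Gb: "C \<in> \<B> \<Longrightarrow> ls_bounded (group_ls G \<B>) C"
proof -
  assume C: "C \<in> \<B>"
  have "C \<subseteq> \<one>\<^bsub>G\<^esub> <#\<^bsub>G\<^esub> (C \<union> {\<one>\<^bsub>G\<^esub>})"
  proof
    fix c assume "c \<in> C"
    then have "\<one>\<^bsub>G\<^esub> \<otimes>\<^bsub>G\<^esub> c \<in> \<one>\<^bsub>G\<^esub> <#\<^bsub>G\<^esub> (C \<union> {\<one>\<^bsub>G\<^esub>})"
      by (intro lcoset_mem) simp
    moreover have "\<one>\<^bsub>G\<^esub> \<otimes>\<^bsub>G\<^esub> c = c"
      using monoid.l_one[OF group.is_monoid[OF grp]] B_sub[OF C] \<open>c \<in> C\<close> by (simp add: subset_iff)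
    ultimately show "c \<in> \<one>\<^bsub>G\<^esub> <#\<^bsub>G\<^esub> (C \<union> {\<one>\<^bsub>G\<^esub>})" by simp
  qed
  moreover have "\<one>\<^bsub>G\<^esub> <#\<^bsub>G\<^esub> (C \<union> {\<one>\<^bsub>G\<^esub>}) \<in> {x <#\<^bsub>G\<^esub> (C \<union> {\<one>\<^bsub>G\<^esub>}) | x. x \<in> carrier G}"
    using monoid.one_closed[OF group.is_monoid[OF grp]] by blast
  ultimately have "\<exists>A\<in>{x <#\<^bsub>G\<^esub> (C \<union> {\<one>\<^bsub>G\<^esub>}) | x. x \<in> carrier G}. C \<subseteq> A"
    by (intro rev_bexI)
  then show ?thesis using coverLS[OF C] unfolding ls_bounded_def by (rule rev_bexI[rotated])
qed

lemma bG: "ls_bounded (group_ls G \<B>) K \<Longrightarrow> \<exists>C\<in>\<B>. K \<subseteq> C"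
proof -
  assume "ls_bounded (group_ls G \<B>) K"
  then obtain U A where U: "U \<in> group_ls G \<B>" "A \<in> U" "K \<subseteq> A" unfolding ls_bounded_def by blast
  then obtain B where B: "B \<in> \<B>" "refines U {g <#\<^bsub>G\<^esub> B | g. g \<in> carrier G}"
    unfolding group_ls_def by blast
  then obtain g where g: "g \<in> carrier G" "A \<subseteq> g <#\<^bsub>G\<^esub> B" using U unfolding refines_def by blast
  have "g <#\<^bsub>G\<^esub> B \<in> \<B>" by (rule B_coset[OF g(1) B(1)])
  moreover have "K \<subseteq> g <#\<^bsub>G\<^esub> B" using g(2) U(3) by (rule order_trans[rotated])
  ultimately show ?thesis by blast
qed

end


theorem theorem6p4:
  fixes G :: "('g, 'm) monoid_scheme" and \<B> :: "'g set set"
    and X :: "'a set" and LS :: "'a set set set" and \<phi> :: "'g \<Rightarrow> 'a \<Rightarrow> 'a"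
  assumes "large_scale_group G \<B>"
    and "large_scale_space X LS"
    and "group_action G X \<phi>"
    and "acts_by_uniform_coarse_equivalences G LS \<phi>"
    and "proper_action G \<B> X LS \<phi>"
    and "cobounded_action G X LS \<phi>"
    and "x0 \<in> X"
  shows "coarse_equivalence (carrier G) (group_ls G \<B>) X LS (\<lambda>g. \<phi> g x0)"
proof -
  note LG = assms(1)
  have grp: "group G" using grp[OF LG] .
  interpret GA: group_action G X \<phi> using assms(3) .
  interpret group G using grp .
  define LSG where "LSG = group_ls G \<B>"
  define f where "f = (\<lambda>g. \<phi> g x0)"
  note spA = assms(2)[unfolded large_scale_space_def]
  note sp = spA[THEN conjunct1] spA[THEN conjunct2, THEN conjunct1]
    spA[THEN conjunct2, THEN conjunct2, THEN conjunct2]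
  have sp1: "\<And>U. U \<in> LS \<Longrightarrow> is_cover X U" using sp(1) by (rule bspec)
  have sp2: "\<And>U V. U \<in> LS \<Longrightarrow> V \<in> LS \<Longrightarrow> st_cover U V \<in> LS" using sp(2) by blast
  have sp4: "\<And>A B. ls_bounded LS A \<Longrightarrow> ls_bounded LS B \<Longrightarrow> ls_bounded LS (A \<union> B)"
    using sp(3) by blast
  define T where "T = (\<lambda>U. {\<phi> g ` A | g A. g \<in> carrier G \<and> A \<in> U})"
  have Tin: "\<And>U. U \<in> LS \<Longrightarrow> T U \<in> LS"
    using assms(4) unfolding acts_by_uniform_coarse_equivalences_def T_def by (rule bspec)
  note prA = assms(5)[unfolded proper_action_def, folded LSG_def]
  note pr = prA[THEN conjunct1] prA[THEN conjunct2]
  have pr1: "\<And>B. ls_bounded LS B \<Longrightarrow> ls_bounded LSG {g \<in> carrier G. \<phi> g ` B \<inter> B \<noteq> {}}"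
    using pr(1) by blast
  have pr2: "\<And>K x. ls_bounded LSG K \<Longrightarrow> x \<in> X \<Longrightarrow> ls_bounded LS ((\<lambda>g. \<phi> g x) ` K)"
    using pr(2) by blast
  obtain B0 where B0: "ls_bounded LS B0" "(\<Union>g\<in>carrier G. \<phi> g ` B0) = X"
    using assms(6) unfolding cobounded_action_def by blast
  have bX: "\<And>B. ls_bounded LS B \<Longrightarrow> B \<subseteq> X"
    using sp1 unfolding ls_bounded_def is_cover_def by blast
  have single: "\<And>y. y \<in> X \<Longrightarrow> ls_bounded LS {y}"
  proof -
    fix y assume y: "y \<in> X"
    obtain U A where "U \<in> LS" "A \<in> U" "B0 \<subseteq> A" using B0(1) unfolding ls_bounded_def by blast
    then have "is_cover X U" using sp1 by blast
    then obtain W where "W \<in> U" "y \<in> W" using y unfolding is_cover_def by blast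
    then show "ls_bounded LS {y}" using \<open>U \<in> LS\<close> unfolding ls_bounded_def by blast
  qed
  have stb: "\<And>E U. ls_bounded LS E \<Longrightarrow> U \<in> LS \<Longrightarrow> ls_bounded LS (st E U)"
  proof -
    fix E U assume E: "ls_bounded LS E" and U: "U \<in> LS"
    obtain W D where "W \<in> LS" "D \<in> W" "E \<subseteq> D" using E unfolding ls_bounded_def by blast
    then have "st D U \<in> st_cover W U" "st E U \<subseteq> st D U" unfolding st_cover_def using st_mono by blast+
    then show "ls_bounded LS (st E U)" using sp2[OF \<open>W \<in> LS\<close> U] unfolding ls_bounded_def by blast
  qed
  have phi1: "\<And>b. b \<in> X \<Longrightarrow> \<phi> \<one>\<^bsub>G\<^esub> b = b"
    by (simp add: GA.id_eq_one[symmetric])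
  have phiinv: "\<And>k b. k \<in> carrier G \<Longrightarrow> b \<in> X \<Longrightarrow> \<phi> (inv\<^bsub>G\<^esub> k) (\<phi> k b) = b"
    by (simp add: GA.composition_rule[symmetric] phi1)
  define B1 where "B1 = B0 \<union> {x0}"
  have B1: "ls_bounded LS B1" "x0 \<in> B1" "(\<Union>g\<in>carrier G. \<phi> g ` B1) = X" "B1 \<subseteq> X"
  proof -
    show "ls_bounded LS B1" unfolding B1_def by (rule sp4[OF B0(1) single[OF assms(7)]])
    show "x0 \<in> B1" unfolding B1_def by simp
    show "B1 \<subseteq> X" unfolding B1_def using bX[OF B0(1)] assms(7) by simp
    have "\<phi> g x0 \<in> X" if "g \<in> carrier G" for g using GA.element_image[OF that assms(7)] by simp
    then show "(\<Union>g\<in>carrier G. \<phi> g ` B1) = X" using B0(2) unfolding B1_def by auto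
  qed
  define h where "h = (\<lambda>y. SOME g. g \<in> carrier G \<and> y \<in> \<phi> g ` B1)"
  have hprop: "\<And>y. y \<in> X \<Longrightarrow> h y \<in> carrier G \<and> y \<in> \<phi> (h y) ` B1"
  proof -
    fix y assume "y \<in> X"
    then have "\<exists>g. g \<in> carrier G \<and> y \<in> \<phi> g ` B1" using B1(3) by blast
    then show "h y \<in> carrier G \<and> y \<in> \<phi> (h y) ` B1" unfolding h_def by (rule someI_ex)
  qed
  obtain WB DB where WB: "WB \<in> LS" "DB \<in> WB" "B1 \<subseteq> DB" using B1(1) unfolding ls_bounded_def by blast
  have fX: "f \<in> carrier G \<rightarrow> X" unfolding f_def using GA.element_image assms(7) by blast
  have cf: "coarse_map (carrier G) LSG LS f"
    unfolding coarse_map_def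
  proof (intro allI impI)
    fix B assume B: "ls_bounded LS B"
    have B': "ls_bounded LS (B \<union> {x0})" using sp4[OF B single[OF assms(7)]] .
    have "f -` B \<inter> carrier G \<subseteq> {g \<in> carrier G. \<phi> g ` (B \<union> {x0}) \<inter> (B \<union> {x0}) \<noteq> {}}"
      unfolding f_def by blast
    then show "ls_bounded LSG (f -` B \<inter> carrier G)" using lsb_mono pr1[OF B'] by blast
  qed
  have lf: "ls_continuous LSG LS f"
    unfolding ls_continuous_def
  proof
    fix U assume U: "U \<in> LSG"
    obtain B where B: "B \<in> \<B>" "refines U {g <#\<^bsub>G\<^esub> B | g. g \<in> carrier G}"
      using U unfolding LSG_def group_ls_def by blast
    have "ls_bounded LS (f ` B)" unfolding f_def
      using pr2[OF _ assms(7)] Gb[OF LG B(1)] unfolding LSG_def by blast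
    then obtain W D where WD: "W \<in> LS" "D \<in> W" "f ` B \<subseteq> D" unfolding ls_bounded_def by blast
    have "refines ((\<lambda>A. f ` A) ` U) (T W)"
      unfolding refines_def
    proof
      fix A' assume "A' \<in> (\<lambda>A. f ` A) ` U"
      then obtain A where A: "A \<in> U" "A' = f ` A" by blast
      then obtain g where g: "g \<in> carrier G" "A \<subseteq> g <#\<^bsub>G\<^esub> B"
        using B(2) unfolding refines_def by blast
      have "f ` A \<subseteq> \<phi> g ` D"
      proof
        fix z assume "z \<in> f ` A"
        then obtain a where "a \<in> A" "z = f a" by blast
        then obtain b where b: "b \<in> B" "a = g \<otimes>\<^bsub>G\<^esub> b" using g unfolding l_coset_def by blast
        have "b \<in> carrier G" using B_sub[OF LG B(1)] b(1) by blast
        then have "z = \<phi> g (f b)" using \<open>z = f a\<close> b g(1) unfolding f_def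
          using GA.composition_rule assms(7) by blast
        then show "z \<in> \<phi> g ` D" using WD(3) b(1) by blast
      qed
      moreover have "\<phi> g ` D \<in> T W" unfolding T_def using g(1) WD(2) by blast
      ultimately show "\<exists>V\<in>T W. A' \<subseteq> V" using A by blast
    qed
    then show "\<exists>V\<in>LS. refines ((\<lambda>A. f ` A) ` U) V" using Tin[OF WD(1)] by blast
  qed
  have hX: "h \<in> X \<rightarrow> carrier G" using hprop by blast
  have c2: "close_maps X LS (f \<circ> h) id"
    unfolding close_maps_def
  proof (intro bexI ballI)
    fix y assume y: "y \<in> X"
    then obtain b where b: "b \<in> B1" "y = \<phi> (h y) b" using hprop by blast
    have "\<phi> (h y) ` DB \<in> T WB" unfolding T_def using hprop[OF y] WB(2) by blast
    moreover have "y \<in> \<phi> (h y) ` DB" "f (h y) \<in> \<phi> (h y) ` DB"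
      using b WB(3) B1(2) unfolding f_def by blast+
    ultimately show "(f \<circ> h) y \<in> st {id y} (T WB)" using st_mem by fastforce
  qed (rule Tin[OF WB(1)])
  have c1: "close_maps (carrier G) LSG (h \<circ> f) id"
    unfolding close_maps_def
  proof -
    obtain C where C: "C \<in> \<B>" "{g \<in> carrier G. \<phi> g ` B1 \<inter> B1 \<noteq> {}} \<subseteq> C"
      using bG[OF LG] pr1[OF B1(1)] unfolding LSG_def by blast
    have "\<forall>g\<in>carrier G. (h \<circ> f) g \<in> st {id g} {x <#\<^bsub>G\<^esub> (C \<union> {\<one>\<^bsub>G\<^esub>}) | x. x \<in> carrier G}"
    proof
      fix g assume g: "g \<in> carrier G"
      have y: "f g \<in> X" using fX g by blast
      define k where "k = h (f g)"
      have k: "k \<in> carrier G" unfolding k_def using hprop[OF y] by blast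
      obtain b where b: "b \<in> B1" "f g = \<phi> k b" using hprop[OF y] unfolding k_def by blast
      have bX: "b \<in> X" using b(1) B1(4) by blast
      have "\<phi> (inv\<^bsub>G\<^esub> k \<otimes>\<^bsub>G\<^esub> g) x0 = \<phi> (inv\<^bsub>G\<^esub> k) (\<phi> g x0)"
        by (rule GA.composition_rule[OF assms(7) inv_closed[OF k] g])
      also have "\<phi> g x0 = \<phi> k b" using b(2) unfolding f_def .
      also have "\<phi> (inv\<^bsub>G\<^esub> k) (\<phi> k b) = b" by (rule phiinv[OF k bX])
      finally have e: "\<phi> (inv\<^bsub>G\<^esub> k \<otimes>\<^bsub>G\<^esub> g) x0 = b" .
      have "b \<in> \<phi> (inv\<^bsub>G\<^esub> k \<otimes>\<^bsub>G\<^esub> g) ` B1" using rev_image_eqI[of x0 B1 b "\<phi> (inv\<^bsub>G\<^esub> k \<otimes>\<^bsub>G\<^esub> g)", OF B1(2) e[symmetric]] .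
      then have "\<phi> (inv\<^bsub>G\<^esub> k \<otimes>\<^bsub>G\<^esub> g) ` B1 \<inter> B1 \<noteq> {}" using b(1) by blast
      moreover have "inv\<^bsub>G\<^esub> k \<otimes>\<^bsub>G\<^esub> g \<in> carrier G" using k g by simp
      ultimately have "inv\<^bsub>G\<^esub> k \<otimes>\<^bsub>G\<^esub> g \<in> {g \<in> carrier G. \<phi> g ` B1 \<inter> B1 \<noteq> {}}" by simp
      then have "inv\<^bsub>G\<^esub> k \<otimes>\<^bsub>G\<^esub> g \<in> C" using C(2) by (rule subsetD[rotated])
      then have "k \<otimes>\<^bsub>G\<^esub> (inv\<^bsub>G\<^esub> k \<otimes>\<^bsub>G\<^esub> g) \<in> k <#\<^bsub>G\<^esub> (C \<union> {\<one>\<^bsub>G\<^esub>})"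
        by (intro lcoset_mem) simp
      moreover have "k \<otimes>\<^bsub>G\<^esub> (inv\<^bsub>G\<^esub> k \<otimes>\<^bsub>G\<^esub> g) = g"
        using k g by (simp add: m_assoc[symmetric])
      moreover have "k \<otimes>\<^bsub>G\<^esub> \<one>\<^bsub>G\<^esub> \<in> k <#\<^bsub>G\<^esub> (C \<union> {\<one>\<^bsub>G\<^esub>})"
        by (intro lcoset_mem) simp
      ultimately have gin: "g \<in> k <#\<^bsub>G\<^esub> (C \<union> {\<one>\<^bsub>G\<^esub>})" and kin: "k \<in> k <#\<^bsub>G\<^esub> (C \<union> {\<one>\<^bsub>G\<^esub>})"
        using k by simp_all
      have mem: "k <#\<^bsub>G\<^esub> (C \<union> {\<one>\<^bsub>G\<^esub>}) \<in> {x <#\<^bsub>G\<^esub> (C \<union> {\<one>\<^bsub>G\<^esub>}) | x. x \<in> carrier G}"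
        by (intro CollectI exI[of _ k] conjI refl k)
      have "k \<in> st {g} {x <#\<^bsub>G\<^esub> (C \<union> {\<one>\<^bsub>G\<^esub>}) | x. x \<in> carrier G}"
        using subsetD[OF st_mem[OF mem gin] kin] .
      then show "(h \<circ> f) g \<in> st {id g} {x <#\<^bsub>G\<^esub> (C \<union> {\<one>\<^bsub>G\<^esub>}) | x. x \<in> carrier G}"
        unfolding k_def by simp
    qed
    then show "\<exists>U\<in>LSG. \<forall>x\<in>carrier G. (h \<circ> f) x \<in> st {id x} U"
      using coverLS[OF LG C(1)] unfolding LSG_def by (rule bexI)
  qed
  have ch: "coarse_map X LS LSG h"
    unfolding coarse_map_def
  proof (intro allI impI)
    fix B assume "ls_bounded LSG B"
    then obtain C where C: "C \<in> \<B>" "B \<subseteq> C" using bG[OF LG] unfolding LSG_def by blast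
    have fC: "ls_bounded LS (f ` C)" unfolding f_def
      using pr2[OF _ assms(7)] Gb[OF LG C(1)] unfolding LSG_def by blast
    have "h -` B \<inter> X \<subseteq> st (f ` C) (T WB)"
    proof
      fix y assume "y \<in> h -` B \<inter> X"
      then have y: "y \<in> X" "h y \<in> C" using C by auto
      then obtain b where b: "b \<in> B1" "y = \<phi> (h y) b" using hprop by blast
      have "\<phi> (h y) ` DB \<in> T WB" unfolding T_def using hprop[OF y(1)] WB(2) by blast
      moreover have "y \<in> \<phi> (h y) ` DB" "f (h y) \<in> \<phi> (h y) ` DB"
        using b WB(3) B1(2) unfolding f_def by blast+
      ultimately show "y \<in> st (f ` C) (T WB)" using y(2) unfolding st_def by blast
    qed
    then show "ls_bounded LS (h -` B \<inter> X)" using lsb_mono stb[OF fC Tin[OF WB(1)]] by blast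
  qed
  have lh: "ls_continuous LS LSG h"
    unfolding ls_continuous_def
  proof
    fix U assume U: "U \<in> LS"
    define S where "S = B1 \<union> st B1 (T U)"
    have Sb: "ls_bounded LS S" unfolding S_def using sp4[OF B1(1) stb[OF B1(1) Tin[OF U]]] .
    obtain C where C: "C \<in> \<B>" "{g \<in> carrier G. \<phi> g ` S \<inter> S \<noteq> {}} \<subseteq> C"
      using bG[OF LG] pr1[OF Sb] unfolding LSG_def by blast
    define Ci where "Ci = (\<lambda>g. inv\<^bsub>G\<^esub> g) ` C"
    have Ci: "Ci \<in> \<B>" unfolding Ci_def using B_inv[OF LG C(1)] .
    define V where "V = {x <#\<^bsub>G\<^esub> (Ci \<union> {\<one>\<^bsub>G\<^esub>}) | x. x \<in> carrier G}"
    have V: "V \<in> LSG" unfolding V_def LSG_def using coverLS[OF LG Ci] .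
    have "refines ((\<lambda>A. h ` A) ` U) V"
      unfolding refines_def
    proof
      fix A' assume "A' \<in> (\<lambda>A. h ` A) ` U"
      then obtain A where A: "A \<in> U" "A' = h ` A" by blast
      have AX: "A \<subseteq> X" using sp1[OF U] A(1) unfolding is_cover_def by blast
      show "\<exists>W\<in>V. A' \<subseteq> W"
      proof (cases "A = {}")
        case True
        have "\<one>\<^bsub>G\<^esub> <#\<^bsub>G\<^esub> (Ci \<union> {\<one>\<^bsub>G\<^esub>}) \<in> V" unfolding V_def by blast
        then show ?thesis using A True by blast
      next
        case False
        then obtain a0 where a0: "a0 \<in> A" by blast
        have a0X: "a0 \<in> X" using a0 AX by blast
        define k0 where "k0 = h a0"
        have k0: "k0 \<in> carrier G" unfolding k0_def using hprop[OF a0X] by blast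
        obtain b0 where b0: "b0 \<in> B1" "a0 = \<phi> k0 b0" using hprop[OF a0X] unfolding k0_def by blast
        have b0X: "b0 \<in> X" using b0(1) B1(4) by blast
        have "h ` A \<subseteq> k0 <#\<^bsub>G\<^esub> (Ci \<union> {\<one>\<^bsub>G\<^esub>})"
        proof
          fix z assume "z \<in> h ` A"
          then obtain y where y: "y \<in> A" "z = h y" by blast
          have yX: "y \<in> X" using y AX by blast
          define k where "k = h y"
          have k: "k \<in> carrier G" unfolding k_def using hprop[OF yX] by blast
          obtain b where b: "b \<in> B1" "y = \<phi> k b" using hprop[OF yX] unfolding k_def by blast
          have bX: "b \<in> X" using b(1) B1(4) by blast
          have ik: "inv\<^bsub>G\<^esub> k \<in> carrier G" using k by simp
          have TA: "\<phi> (inv\<^bsub>G\<^esub> k) ` A \<in> T U" unfolding T_def using ik A(1) by blast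
          have "b = \<phi> (inv\<^bsub>G\<^esub> k) y" using phiinv[OF k bX] b(2) by simp
          then have "b \<in> \<phi> (inv\<^bsub>G\<^esub> k) ` A" using y(1) by (rule rev_image_eqI[rotated])
          then have "\<phi> (inv\<^bsub>G\<^esub> k) ` A \<subseteq> st B1 (T U)" using TA b(1) unfolding st_def by blast
          then have "\<phi> (inv\<^bsub>G\<^esub> k) a0 \<in> S" using a0 unfolding S_def by blast
          moreover have "\<phi> (inv\<^bsub>G\<^esub> k) a0 = \<phi> (inv\<^bsub>G\<^esub> k \<otimes>\<^bsub>G\<^esub> k0) b0"
            using GA.composition_rule[OF b0X ik k0] b0(2) by simp
          moreover have "b0 \<in> S" using b0(1) unfolding S_def by blast
          ultimately have "\<phi> (inv\<^bsub>G\<^esub> k \<otimes>\<^bsub>G\<^esub> k0) ` S \<inter> S \<noteq> {}" by blast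
          then have "inv\<^bsub>G\<^esub> k \<otimes>\<^bsub>G\<^esub> k0 \<in> C" using C(2) ik k0 by blast
          then have "inv\<^bsub>G\<^esub> (inv\<^bsub>G\<^esub> k \<otimes>\<^bsub>G\<^esub> k0) \<in> Ci" unfolding Ci_def by blast
          moreover have "inv\<^bsub>G\<^esub> (inv\<^bsub>G\<^esub> k \<otimes>\<^bsub>G\<^esub> k0) = inv\<^bsub>G\<^esub> k0 \<otimes>\<^bsub>G\<^esub> k"
            using k k0 by (simp add: inv_mult_group)
          ultimately have "k0 \<otimes>\<^bsub>G\<^esub> (inv\<^bsub>G\<^esub> k0 \<otimes>\<^bsub>G\<^esub> k) \<in> k0 <#\<^bsub>G\<^esub> (Ci \<union> {\<one>\<^bsub>G\<^esub>})"
            by (intro lcoset_mem) simp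
          moreover have "k0 \<otimes>\<^bsub>G\<^esub> (inv\<^bsub>G\<^esub> k0 \<otimes>\<^bsub>G\<^esub> k) = k"
            using k k0 by (simp add: m_assoc[symmetric])
          ultimately show "z \<in> k0 <#\<^bsub>G\<^esub> (Ci \<union> {\<one>\<^bsub>G\<^esub>})" using y(2) unfolding k_def by simp
        qed
        moreover have "k0 <#\<^bsub>G\<^esub> (Ci \<union> {\<one>\<^bsub>G\<^esub>}) \<in> V" unfolding V_def using k0 by blast
        ultimately show ?thesis using A(2) by blast
      qed
    qed
    then show "\<exists>V\<in>LSG. refines ((\<lambda>A. h ` A) ` U) V" using V by blast
  qed
  show ?thesis
    unfolding coarse_equivalence_def f_def[symmetric] LSG_def[symmetric]
    by (intro conjI exI[of _ h] fX cf lf hX ch lh c1 c2)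
qed

end
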